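(* For $n\ge0$, $\left|\Pi_n\wr C_2(1^11^1,1^11^2)\right| = \left|\mathcal{S}_{n+1}(12\!-\!3,\,214\!-\!3)\right|$.
   Context: For $n\ge0$ let $[n]=\{1,\dots,n\}$. A $2$-colored set partition of $[n]$ is a set partition of $[n]$ together with an assignment of a color from $\{1,2\}$ to each element; $\Pi_n\wr C_2$ is the set of these (with $\Pi_0\wr C_2$ containing only the empty partition). $\Pi_n\wr C_2(1^11^1,1^11^2)$ is the set of those colored partitions in which no two elements of the same block have the same color, and there are no $i<j$ in the same block with $i$ colored $1$ and $j$ colored $2$. $\mathcal{S}_{m}(12\!-\!3,214\!-\!3)$ is the set of permutations $q=q_1\cdots q_m$ of $[m]$ that contain no indices $a<a+1<b$ with $q_a<q_{a+1}<q_b$ (an occurrence of $12\!-\!3$) and no indices $a<a+1<a+2<b$ with $q_{a+1}<q_a<q_b<q_{a+2}$ (an occurrence of $214\!-\!3$). *)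

theory Defs
  imports Main "HOL-Library.Disjoint_Sets" "HOL-Library.FuncSet"
begin

definition colored_set_partitions :: "nat \<Rightarrow> (nat set set \<times> (nat \<Rightarrow> nat)) set" where
  "colored_set_partitions n =
     {(P, c). partition_on {1..n} P \<and> c \<in> {1..n} \<rightarrow>\<^sub>E {1, 2}}"

definition avoid_11_12 :: "nat \<Rightarrow> (nat set set \<times> (nat \<Rightarrow> nat)) set" where
  "avoid_11_12 n =
     {(P, c) \<in> colored_set_partitions n.
        (\<forall>B\<in>P. \<forall>i\<in>B. \<forall>j\<in>B. i \<noteq> j \<longrightarrow> c i \<noteq> c j) \<and>
        (\<not> (\<exists>B\<in>P. \<exists>i\<in>B. \<exists>j\<in>B. i < j \<and> c i = 1 \<and> c j = 2))}"

(* permutations q = q_1 ... q_m of [m], as lists (list index k = position k+1) *)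
definition perms_of :: "nat \<Rightarrow> nat list set" where
  "perms_of m = {q. distinct q \<and> set q = {1..m}}"

definition contains_12_3 :: "nat list \<Rightarrow> bool" where
  "contains_12_3 q = (\<exists>a b. a + 1 < b \<and> b < length q \<and>
       q ! a < q ! (a + 1) \<and> q ! (a + 1) < q ! b)"

definition contains_214_3 :: "nat list \<Rightarrow> bool" where
  "contains_214_3 q = (\<exists>a b. a + 2 < b \<and> b < length q \<and>
       q ! (a + 1) < q ! a \<and> q ! a < q ! b \<and> q ! b < q ! (a + 2))"

definition S_12_3_214_3 :: "nat \<Rightarrow> nat list set" where
  "S_12_3_214_3 m = {q \<in> perms_of m. \<not> contains_12_3 q \<and> \<not> contains_214_3 q}"

end

theory Submission
  imports Defs
begin


fun p123 :: "nat list \<Rightarrow> bool" where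
  "p123 [] = False"
| "p123 (x # r) = (p123 r \<or> (case r of [] \<Rightarrow> False | y # s \<Rightarrow> x < y \<and> (\<exists>w\<in>set s. y < w)))"

fun p214 :: "nat list \<Rightarrow> bool" where
  "p214 [] = False"
| "p214 (x # r) = (p214 r \<or> (case r of y # z # s \<Rightarrow> y < x \<and> (\<exists>w\<in>set s. x < w \<and> w < z) | _ \<Rightarrow> False))"

lemma c123_Cons: "contains_12_3 (x # r) \<longleftrightarrow> contains_12_3 r \<or>
   (case r of [] \<Rightarrow> False | y # s \<Rightarrow> x < y \<and> (\<exists>w\<in>set s. y < w))"
proof
  assume "contains_12_3 (x # r)"
  then obtain a b where h: "a + 1 < b" "b < length (x#r)" "(x#r) ! a < (x#r) ! (a + 1)" "(x#r) ! (a + 1) < (x#r) ! b"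
    unfolding contains_12_3_def by blast
  show "contains_12_3 r \<or> (case r of [] \<Rightarrow> False | y # s \<Rightarrow> x < y \<and> (\<exists>w\<in>set s. y < w))"
  proof (cases a)
    case 0
    then obtain y s where r: "r = y # s" using h by (cases r) auto
    have "s ! (b - 2) \<in> set s" using h r 0 by auto
    moreover have "s ! (b - 2) = (x#r) ! b" using h r 0
      by (cases b; cases "b - 1") auto
    ultimately show ?thesis using h r 0 by auto
  next
    case (Suc a')
    then have "contains_12_3 r" using h unfolding contains_12_3_def
      by (intro exI[of _ a'] exI[of _ "b - 1"]) (cases b; auto)
    then show ?thesis by simp
  qed
next
  assume "contains_12_3 r \<or> (case r of [] \<Rightarrow> False | y # s \<Rightarrow> x < y \<and> (\<exists>w\<in>set s. y < w))"
  then show "contains_12_3 (x # r)"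
  proof
    assume "contains_12_3 r"
    then obtain a b where h: "a + 1 < b" "b < length r" "r ! a < r ! (a + 1)" "r ! (a + 1) < r ! b"
      unfolding contains_12_3_def by blast
    then show ?thesis unfolding contains_12_3_def
      by (intro exI[of _ "Suc a"] exI[of _ "Suc b"]) auto
  next
    assume "case r of [] \<Rightarrow> False | y # s \<Rightarrow> x < y \<and> (\<exists>w\<in>set s. y < w)"
    then obtain y s w where r: "r = y # s" "x < y" "w \<in> set s" "y < w" by (cases r) auto
    then obtain i where i: "i < length s" "s ! i = w" by (auto simp: in_set_conv_nth)
    then show ?thesis unfolding contains_12_3_def using r
      by (intro exI[of _ 0] exI[of _ "i + 2"]) auto
  qed
qed

lemma c214_Cons: "contains_214_3 (x # r) \<longleftrightarrow> contains_214_3 r \<or>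
   (case r of y # z # s \<Rightarrow> y < x \<and> (\<exists>w\<in>set s. x < w \<and> w < z) | _ \<Rightarrow> False)"
proof
  assume "contains_214_3 (x # r)"
  then obtain a b where h: "a + 2 < b" "b < length (x#r)" "(x#r) ! (a+1) < (x#r) ! a" "(x#r) ! a < (x#r) ! b" "(x#r) ! b < (x#r) ! (a + 2)"
    unfolding contains_214_3_def by blast
  show "contains_214_3 r \<or> (case r of y # z # s \<Rightarrow> y < x \<and> (\<exists>w\<in>set s. x < w \<and> w < z) | _ \<Rightarrow> False)"
  proof (cases a)
    case 0
    then obtain y z s where r: "r = y # z # s" using h by (cases r; cases "tl r") auto
    have "s ! (b - 3) \<in> set s" using h r 0 by auto
    moreover have "s ! (b - 3) = (x#r) ! b" using h r 0
      by (cases b; cases "b - 1"; cases "b - 2") auto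
    ultimately show ?thesis using h r 0 by auto
  next
    case (Suc a')
    then have "contains_214_3 r" using h unfolding contains_214_3_def
      by (intro exI[of _ a'] exI[of _ "b - 1"]) (cases b; auto)
    then show ?thesis by simp
  qed
next
  assume "contains_214_3 r \<or> (case r of y # z # s \<Rightarrow> y < x \<and> (\<exists>w\<in>set s. x < w \<and> w < z) | _ \<Rightarrow> False)"
  then show "contains_214_3 (x # r)"
  proof
    assume "contains_214_3 r"
    then obtain a b where h: "a + 2 < b" "b < length r" "r ! (a+1) < r ! a" "r ! a < r ! b" "r ! b < r ! (a + 2)"
      unfolding contains_214_3_def by blast
    then show ?thesis unfolding contains_214_3_def
      by (intro exI[of _ "Suc a"] exI[of _ "Suc b"]) auto
  next
    assume "case r of y # z # s \<Rightarrow> y < x \<and> (\<exists>w\<in>set s. x < w \<and> w < z) | _ \<Rightarrow> False"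
    then obtain y z s w where r: "r = y # z # s" "y < x" "w \<in> set s" "x < w" "w < z"
      by (cases r rule: remdups_adj.cases) auto
    then obtain i where i: "i < length s" "s ! i = w" by (auto simp: in_set_conv_nth)
    then show ?thesis unfolding contains_214_3_def using r
      by (intro exI[of _ 0] exI[of _ "i + 3"]) auto
  qed
qed

definition av :: "nat list \<Rightarrow> bool" where
  "av q \<longleftrightarrow> \<not> contains_12_3 q \<and> \<not> contains_214_3 q"

lemma av_tl: "av (x # r) \<Longrightarrow> av r"
  unfolding av_def using c123_Cons c214_Cons by blast

lemma av_Nil: "av []"
  unfolding av_def contains_12_3_def contains_214_3_def by auto

lemma keyG:
  assumes "av (x # r)" "distinct (x # r)" "a \<in> set r" "b \<in> set r" "a \<noteq> b" "x < a" "x < b"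
  shows "\<exists>y s. r = y # s \<and> x < y"
  using assms
proof (induction r arbitrary: x)
  case Nil then show ?case by simp
next
  case (Cons y r')
  show ?case
  proof (cases "x < y")
    case True then show ?thesis by blast
  next
    case False
    with Cons.prems have yx: "y < x" by auto
    have ab: "a \<in> set r'" "b \<in> set r'" using Cons.prems yx by auto
    have "\<exists>z s. r' = z # s \<and> y < z"
      using Cons.IH[of y] Cons.prems ab yx av_tl[OF Cons.prems(1)] by auto
    then obtain z s where r': "r' = z # s" "y < z" by blast
    have n1: "\<not> (\<exists>w\<in>set s. z < w)" using av_tl[OF Cons.prems(1)] r'
      unfolding av_def c123_Cons by auto
    obtain w where w: "w \<in> set s" "x < w" "w \<noteq> z"
      using ab r' Cons.prems by auto
    with n1 have "w < z" by auto
    then have "contains_214_3 (x # y # z # s)" unfolding c214_Cons using yx w by auto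
    then show ?thesis using Cons.prems(1) r' unfolding av_def by simp
  qed
qed

definition avq :: "nat set \<Rightarrow> nat list set" where
  "avq A = {q. distinct q \<and> set q = A \<and> av q}"

lemma finite_avq: "finite A \<Longrightarrow> finite (avq A)"
  by (rule finite_subset[OF _ finite_subset_distinct[of A]]) (auto simp: avq_def)

lemma av_Cons_max: "av r \<Longrightarrow> \<forall>w\<in>set r. w < x \<Longrightarrow> av (x # r)"
  unfolding av_def c123_Cons c214_Cons by (auto split: list.splits)

lemma av_Cons_second:
  assumes a: "av r" and b: "\<forall>w\<in>set r. w < x \<or> w = M" and c: "\<forall>w\<in>set r. w \<le> M"
  shows "av (x # r)"
proof -
  have 1: "\<not> contains_12_3 (x # r)"
  proof
    assume "contains_12_3 (x # r)"
    then obtain y s w where "r = y # s" "x < y" "w \<in> set s" "y < w"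
      using a unfolding av_def c123_Cons by (auto split: list.splits)
    with b c show False by force
  qed
  have 2: "\<not> contains_214_3 (x # r)"
  proof
    assume "contains_214_3 (x # r)"
    then obtain y z s w where "r = y # z # s" "y < x" "w \<in> set s" "x < w" "w < z"
      using a unfolding av_def c214_Cons by (auto split: list.splits)
    with b c show False by force
  qed
  from 1 2 show ?thesis unfolding av_def by simp
qed

lemma av_Cons_third: "av s \<Longrightarrow> \<forall>w\<in>set s. w < M \<Longrightarrow> k < M \<Longrightarrow> av (k # M # s)"
  using av_Cons_max[of s M] unfolding av_def c123_Cons[of k] c214_Cons[of k]
  by (auto split: list.splits) (meson less_asym)



lemma avq_rec:
  assumes fin: "finite A" and c2: "2 \<le> card A"
  defines "M \<equiv> Max A"
  defines "M' \<equiv> Max (A - {M})"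
  shows "avq A = Cons M ` avq (A - {M}) \<union> Cons M' ` avq (A - {M'})
     \<union> (\<Union>k\<in>A - {M, M'}. (\<lambda>r. k # M # r) ` avq (A - {k, M}))"
proof -
  have ne: "A \<noteq> {}" using c2 by auto
  have MA: "M \<in> A" unfolding M_def using fin ne by simp
  have Mmax: "\<forall>w\<in>A. w \<le> M" unfolding M_def using fin by simp
  have "card (A - {M}) = card A - 1" using MA fin by simp
  then have "card (A - {M}) \<ge> 1" using c2 by simp
  then have ne2: "A - {M} \<noteq> {}" by (metis card.empty not_one_le_zero)
  have M'A: "M' \<in> A - {M}" unfolding M'_def using fin ne2 by (intro Max_in) auto
  have M'max: "\<forall>w\<in>A - {M}. w \<le> M'" unfolding M'_def using fin by simp
  have "M' \<le> M" using M'A Mmax by blast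
  then have MM': "M' < M" using M'A by auto
  have Mlt: "\<And>w. w \<in> A \<Longrightarrow> w \<noteq> M \<Longrightarrow> w < M"
    using Mmax le_neq_implies_less by blast
  have M'lt: "\<And>w. w \<in> A \<Longrightarrow> w \<noteq> M \<Longrightarrow> w \<noteq> M' \<Longrightarrow> w < M'"
    using M'max le_neq_implies_less by blast
  show ?thesis
  proof (intro equalityI subsetI)
    fix q assume q: "q \<in> avq A"
    then have qd: "distinct q" "set q = A" "av q" by (auto simp: avq_def)
    then obtain h r where qr: "q = h # r" using ne by (cases q) auto
    have rA: "set r = A - {h}" "distinct r" "av r" using qd qr av_tl by auto
    consider "h = M" | "h = M'" | "h \<in> A - {M, M'}" using qd qr by auto
    then show "q \<in> Cons M ` avq (A - {M}) \<union> Cons M' ` avq (A - {M'})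
     \<union> (\<Union>k\<in>A - {M, M'}. (\<lambda>r. k # M # r) ` avq (A - {k, M}))"
    proof cases
      case 1 then show ?thesis using qr rA by (auto simp: avq_def)
    next
      case 2 then show ?thesis using qr rA by (auto simp: avq_def)
    next
      case 3
      then have hM': "h < M'" using M'lt by auto
      have "\<exists>y s. r = y # s \<and> h < y"
        by (rule keyG[of h r M M']) (use qd qr rA 3 MA M'A MM' hM' in \<open>auto\<close>)
      then obtain y s where rs: "r = y # s" "h < y" by blast
      have "y = M"
      proof (rule ccontr)
        assume "y \<noteq> M"
        have "M \<in> set r" using rA(1) MA 3 by blast
        then have "M \<in> set s" using rs \<open>y \<noteq> M\<close> by simp
        moreover have "y < M"
        proof -
          have "y \<in> set r" using rs by simp
          then have "y \<in> A" using rA(1) by blast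
          then have "y \<le> M" using Mmax by blast
          then show "y < M" using \<open>y \<noteq> M\<close> by simp
        qed
        ultimately have "contains_12_3 (h # r)" unfolding c123_Cons using rs by auto
        then show False using qd qr unfolding av_def by simp
      qed
      then have "s \<in> avq (A - {h, M})" using rA rs av_tl by (auto simp: avq_def)
      then have "q \<in> (\<lambda>r. h # M # r) ` avq (A - {h, M})"
        using qr rs \<open>y = M\<close> by (intro image_eqI[of _ _ s]) auto
      then show ?thesis using 3 by blast
    qed
  next
    fix q assume "q \<in> Cons M ` avq (A - {M}) \<union> Cons M' ` avq (A - {M'})
     \<union> (\<Union>k\<in>A - {M, M'}. (\<lambda>r. k # M # r) ` avq (A - {k, M}))"
    then consider r where "q = M # r" "r \<in> avq (A - {M})"
      | r where "q = M' # r" "r \<in> avq (A - {M'})"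
      | k s where "k \<in> A - {M, M'}" "q = k # M # s" "s \<in> avq (A - {k, M})"
      by (elim UnE UN_E imageE) blast+
    then show "q \<in> avq A"
    proof cases
      case 1
      then have "\<forall>w\<in>set r. w < M" using Mlt unfolding avq_def by auto
      then show ?thesis using 1 MA av_Cons_max[of r M] by (auto simp: avq_def)
    next
      case 2
      then have "\<forall>w\<in>set r. w < M' \<or> w = M" "\<forall>w\<in>set r. w \<le> M" using Mmax M'lt
        unfolding avq_def by auto
      then show ?thesis using 2 M'A av_Cons_second[of r M' M] by (auto simp: avq_def)
    next
      case 3
      then have "\<forall>w\<in>set s. w < M" using Mlt unfolding avq_def by auto
      moreover have "k < M" using 3 Mlt by auto
      ultimately show ?thesis using 3 MA av_Cons_third[of s M k] by (auto simp: avq_def)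
    qed
  qed
qed



fun fq :: "nat \<Rightarrow> nat" where
  "fq 0 = 1" | "fq (Suc 0) = 1" | "fq (Suc (Suc n)) = 2 * fq (Suc n) + n * fq n"

lemma avq_empty: "avq {} = {[]}"
  by (auto simp: avq_def av_Nil)

lemma avq_single: "avq {a} = {[a]}"
proof -
  have "av [a]" using av_Cons_max[OF av_Nil] by simp
  moreover have "distinct q \<Longrightarrow> set q = {a} \<Longrightarrow> q = [a]" for q
  proof -
    assume d: "distinct q" "set q = {a}"
    then have "length q = 1" using distinct_card by fastforce
    then obtain b where "q = [b]" by (cases q) auto
    with d show ?thesis by simp
  qed
  ultimately show ?thesis unfolding avq_def by auto
qed

lemma avq_card: "finite A \<Longrightarrow> card (avq A) = fq (card A)"
proof (induction "card A" arbitrary: A rule: less_induct)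
  case less
  show ?case
  proof (cases "card A")
    case 0
    then have "A = {}" using less.prems by simp
    then show ?thesis by (simp add: avq_empty)
  next
    case (Suc m)
    show ?thesis
    proof (cases m)
      case 0
      then obtain a where "A = {a}" using Suc card_1_singletonE by auto
      then show ?thesis by (simp add: avq_single)
    next
      case (Suc n)
      have fin: "finite A" by fact
      have c: "card A = Suc (Suc n)" using \<open>card A = Suc m\<close> Suc by simp
      define M where "M = Max A"
      define M' where "M' = Max (A - {M})"
      have ne: "A \<noteq> {}" using c by auto
      have MA: "M \<in> A" unfolding M_def using fin ne by simp
      have cM: "card (A - {M}) = Suc n" using MA fin c by simp
      then have ne2: "A - {M} \<noteq> {}" by (metis card.empty Suc_neq_Zero)
      have M'A: "M' \<in> A - {M}" unfolding M'_def using fin ne2 by (intro Max_in) auto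
      have cM': "card (A - {M'}) = Suc n" using M'A fin c by simp
      have "A - {M, M'} = (A - {M}) - {M'}" by auto
      then have cMM': "card (A - {M, M'}) = n" using M'A cM fin by simp
      have ck: "card (A - {k, M}) = n" if "k \<in> A - {M, M'}" for k
      proof -
        have "A - {k, M} = (A - {M}) - {k}" by auto
        moreover have "k \<in> A - {M}" using that by auto
        ultimately show ?thesis using cM fin by simp
      qed
      let ?X1 = "Cons M ` avq (A - {M})"
      let ?X2 = "Cons M' ` avq (A - {M'})"
      let ?X3 = "\<Union>k\<in>A - {M, M'}. (\<lambda>r. k # M # r) ` avq (A - {k, M})"
      have rec: "avq A = ?X1 \<union> ?X2 \<union> ?X3"
        unfolding M_def M'_def by (rule avq_rec[OF fin]) (use c in simp)
      have f1: "finite ?X1" "finite ?X2" using fin by (simp_all add: finite_avq)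
      have f3: "finite ?X3" using fin by (simp add: finite_avq)
      have d12: "?X1 \<inter> ?X2 = {}" using M'A by auto
      have h3: "\<forall>x\<in>?X3. hd x \<notin> {M, M'}" by auto
      have h12: "\<forall>x\<in>?X1 \<union> ?X2. hd x \<in> {M, M'}" by auto
      have d3: "(?X1 \<union> ?X2) \<inter> ?X3 = {}" using h3 h12 by blast
      have "card (avq A) = card ?X1 + card ?X2 + card ?X3"
        unfolding rec using f1 f3 d12 d3 by (simp add: card_Un_disjoint)
      also have "card ?X1 = fq (Suc n)"
        using less.hyps[of "A - {M}"] cM c fin by (simp add: card_image)
      also have "card ?X2 = fq (Suc n)"
        using less.hyps[of "A - {M'}"] cM' c fin by (simp add: card_image)
      also have "card ?X3 = (\<Sum>k\<in>A - {M, M'}. card ((\<lambda>r. k # M # r) ` avq (A - {k, M})))"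
      proof (rule card_UN_disjoint)
        show "finite (A - {M, M'})" using fin by simp
        show "\<forall>k\<in>A - {M, M'}. finite ((\<lambda>r. k # M # r) ` avq (A - {k, M}))"
          using fin by (simp add: finite_avq)
        show "\<forall>i\<in>A - {M, M'}. \<forall>j\<in>A - {M, M'}. i \<noteq> j \<longrightarrow>
          (\<lambda>r. i # M # r) ` avq (A - {i, M}) \<inter> (\<lambda>r. j # M # r) ` avq (A - {j, M}) = {}"
          by blast
      qed
      also have "\<dots> = (\<Sum>k\<in>A - {M, M'}. fq n)"
      proof (rule sum.cong)
        fix k assume k: "k \<in> A - {M, M'}"
        have "card ((\<lambda>r. k # M # r) ` avq (A - {k, M})) = card (avq (A - {k, M}))"
          by (rule card_image) (auto simp: inj_on_def)
        also have "\<dots> = fq n" using less.hyps[of "A - {k, M}"] ck[OF k] c fin by simp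
        finally show "card ((\<lambda>r. k # M # r) ` avq (A - {k, M})) = fq n" .
      qed simp
      also have "\<dots> = n * fq n" using cMM' by simp
      finally show ?thesis using c by simp
    qed
  qed
qed



definition avA :: "nat set \<Rightarrow> (nat set set \<times> (nat \<Rightarrow> nat)) set" where
  "avA A = {(P, c). partition_on A P \<and> c \<in> A \<rightarrow>\<^sub>E {1, 2} \<and>
     (\<forall>B\<in>P. \<forall>i\<in>B. \<forall>j\<in>B. i < j \<longrightarrow> c i = 2 \<and> c j = 1)}"

lemma avoid_eq: "avoid_11_12 n = avA {1..n}"
proof -
  have key: "((\<forall>B\<in>P. \<forall>i\<in>B. \<forall>j\<in>B. i \<noteq> j \<longrightarrow> c i \<noteq> c j) \<and>
        \<not> (\<exists>B\<in>P. \<exists>i\<in>B. \<exists>j\<in>B. i < j \<and> c i = 1 \<and> c j = 2)) \<longleftrightarrow>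
        (\<forall>B\<in>P. \<forall>i\<in>B. \<forall>j\<in>B. i < j \<longrightarrow> c i = 2 \<and> c j = 1)"
    if hP: "partition_on {1..n} P" and hc: "c \<in> {1..n} \<rightarrow>\<^sub>E {1, 2}" for P :: "nat set set" and c :: "nat \<Rightarrow> nat"
  proof -
    have col: "c i = 1 \<or> c i = 2" if "B \<in> P" "i \<in> B" for B i
    proof -
      have "i \<in> {1..n}" using partition_onD1[OF hP] that by blast
      then have "c i \<in> {1, 2}" using PiE_mem[OF hc] by blast
      then show ?thesis by blast
    qed
    show ?thesis
    proof
      assume h: "(\<forall>B\<in>P. \<forall>i\<in>B. \<forall>j\<in>B. i \<noteq> j \<longrightarrow> c i \<noteq> c j) \<and>
        \<not> (\<exists>B\<in>P. \<exists>i\<in>B. \<exists>j\<in>B. i < j \<and> c i = 1 \<and> c j = 2)"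
      show "\<forall>B\<in>P. \<forall>i\<in>B. \<forall>j\<in>B. i < j \<longrightarrow> c i = 2 \<and> c j = 1"
      proof (intro ballI impI)
        fix B i j assume "B \<in> P" "i \<in> B" "j \<in> B" "i < j"
        note bij = this
        have h1: "\<forall>B\<in>P. \<forall>i\<in>B. \<forall>j\<in>B. i \<noteq> j \<longrightarrow> c i \<noteq> c j" using h by (rule conjunct1)
        have h2: "\<not> (\<exists>B\<in>P. \<exists>i\<in>B. \<exists>j\<in>B. i < j \<and> c i = 1 \<and> c j = 2)" using h by (rule conjunct2)
        have e1: "c i \<noteq> c j" using h1 bij by simp
        have e2: "\<not> (c i = 1 \<and> c j = 2)" using h2 bij by blast
        show "c i = 2 \<and> c j = 1"
          using e1 e2 col[OF \<open>B \<in> P\<close> \<open>i \<in> B\<close>] col[OF \<open>B \<in> P\<close> \<open>j \<in> B\<close>] by auto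
      qed
    next
      assume h: "\<forall>B\<in>P. \<forall>i\<in>B. \<forall>j\<in>B. i < j \<longrightarrow> c i = 2 \<and> c j = 1"
      have 1: "\<forall>B\<in>P. \<forall>i\<in>B. \<forall>j\<in>B. i \<noteq> j \<longrightarrow> c i \<noteq> c j"
      proof (intro ballI impI)
        fix B i j assume "B \<in> P" "i \<in> B" "j \<in> B" "i \<noteq> j"
        then consider "i < j" | "j < i" by linarith
        then show "c i \<noteq> c j"
        proof cases
          case 1 then have "c i = 2 \<and> c j = 1" using h \<open>B \<in> P\<close> \<open>i \<in> B\<close> \<open>j \<in> B\<close> by blast
          then show ?thesis by simp
        next
          case 2 then have "c j = 2 \<and> c i = 1" using h \<open>B \<in> P\<close> \<open>i \<in> B\<close> \<open>j \<in> B\<close> by blast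
          then show ?thesis by simp
        qed
      qed
      have 2: "\<not> (\<exists>B\<in>P. \<exists>i\<in>B. \<exists>j\<in>B. i < j \<and> c i = 1 \<and> c j = 2)"
      proof
        assume "\<exists>B\<in>P. \<exists>i\<in>B. \<exists>j\<in>B. i < j \<and> c i = 1 \<and> c j = 2"
        then obtain B i j where "B \<in> P" "i \<in> B" "j \<in> B" "i < j" "c i = 1" by blast
        with h have "c i = 2" by blast
        with \<open>c i = 1\<close> show False by simp
      qed
      show "(\<forall>B\<in>P. \<forall>i\<in>B. \<forall>j\<in>B. i \<noteq> j \<longrightarrow> c i \<noteq> c j) \<and>
        \<not> (\<exists>B\<in>P. \<exists>i\<in>B. \<exists>j\<in>B. i < j \<and> c i = 1 \<and> c j = 2)" using 1 2 by blast
    qed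
  qed
  show ?thesis
  proof (rule set_eqI)
    fix x :: "nat set set \<times> (nat \<Rightarrow> nat)"
    obtain P c where x: "x = (P, c)" by (cases x)
    show "x \<in> avoid_11_12 n \<longleftrightarrow> x \<in> avA {1..n}"
    proof
      assume "x \<in> avoid_11_12 n"
      then have a: "partition_on {1..n} P" "c \<in> {1..n} \<rightarrow>\<^sub>E {1, 2}"
        "(\<forall>B\<in>P. \<forall>i\<in>B. \<forall>j\<in>B. i \<noteq> j \<longrightarrow> c i \<noteq> c j) \<and>
        \<not> (\<exists>B\<in>P. \<exists>i\<in>B. \<exists>j\<in>B. i < j \<and> c i = 1 \<and> c j = 2)"
        unfolding x avoid_11_12_def colored_set_partitions_def by auto
      then show "x \<in> avA {1..n}" using key[OF a(1,2)] unfolding x avA_def by auto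
    next
      assume "x \<in> avA {1..n}"
      then have a: "partition_on {1..n} P" "c \<in> {1..n} \<rightarrow>\<^sub>E {1, 2}"
        "\<forall>B\<in>P. \<forall>i\<in>B. \<forall>j\<in>B. i < j \<longrightarrow> c i = 2 \<and> c j = 1"
        unfolding x avA_def by auto
      then show "x \<in> avoid_11_12 n" using key[OF a(1,2)]
        unfolding x avoid_11_12_def colored_set_partitions_def by auto
    qed
  qed
qed

lemma part_block: "partition_on A P \<Longrightarrow> B \<in> P \<Longrightarrow> B \<subseteq> A"
  using partition_onD1 by blast

lemma part_remove: assumes "partition_on A P" "B \<in> P" shows "partition_on (A - B) (P - {B})"
proof -
  have "disjnt B (\<Union>(P - {B}))"
    using partition_onD2[OF assms(1)] assms(2) by (auto simp: disjnt_def disjoint_def)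
  moreover have "P = insert B (P - {B})" using assms(2) by auto
  ultimately show ?thesis using assms(1) partition_on_insert[of B "P - {B}" A] by simp
qed

lemma part_add: assumes "partition_on A' P" "B \<noteq> {}" "B \<inter> A' = {}"
  shows "partition_on (A' \<union> B) (insert B P)"
proof -
  have "disjnt B (\<Union>P)" using partition_onD1[OF assms(1)] assms(3) by (auto simp: disjnt_def)
  moreover have "A' \<union> B - B = A'" using assms(3) by auto
  ultimately show ?thesis using assms partition_on_insert[of B P "A' \<union> B"] by simp
qed

lemma finite_avA: "finite A \<Longrightarrow> finite (avA A)"
proof -
  assume fin: "finite A"
  have "avA A \<subseteq> Pow (Pow A) \<times> (A \<rightarrow>\<^sub>E {1, 2})"
    unfolding avA_def using part_block by fastforce
  moreover have "finite (Pow (Pow A) \<times> (A \<rightarrow>\<^sub>E ({1, 2}::nat set)))"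
    using fin by (intro finite_cartesian_product finite_PiE) auto
  ultimately show ?thesis using finite_subset by blast
qed



lemma avA_memI:
  assumes "partition_on A P" "c \<in> A \<rightarrow>\<^sub>E {1, 2}"
    "\<And>B i j. B \<in> P \<Longrightarrow> i \<in> B \<Longrightarrow> j \<in> B \<Longrightarrow> i < j \<Longrightarrow> c i = 2 \<and> c j = 1"
  shows "(P, c) \<in> avA A"
  using assms unfolding avA_def by blast

lemma avA_memD:
  assumes "(P, c) \<in> avA A"
  shows "partition_on A P" "c \<in> A \<rightarrow>\<^sub>E {1, 2}"
    "\<And>B i j. B \<in> P \<Longrightarrow> i \<in> B \<Longrightarrow> j \<in> B \<Longrightarrow> i < j \<Longrightarrow> c i = 2 \<and> c j = 1"
  using assms unfolding avA_def by blast+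

lemma upd_PiE: "c \<in> A \<rightarrow>\<^sub>E S \<Longrightarrow> v \<in> S \<Longrightarrow> c(M := v) \<in> insert M A \<rightarrow>\<^sub>E S"
  unfolding PiE_def extensional_def Pi_def by auto

lemma upd_PiE_del: "c \<in> A \<rightarrow>\<^sub>E S \<Longrightarrow> c(M := undefined) \<in> (A - {M}) \<rightarrow>\<^sub>E S"
  unfolding PiE_def extensional_def Pi_def by auto

definition F1 :: "nat \<Rightarrow> (nat set set \<times> (nat \<Rightarrow> nat)) \<times> nat \<Rightarrow> nat set set \<times> (nat \<Rightarrow> nat)" where
  "F1 M x = (insert {M} (fst (fst x)), (snd (fst x))(M := snd x))"

definition F2 :: "nat \<Rightarrow> nat \<Rightarrow> nat set set \<times> (nat \<Rightarrow> nat) \<Rightarrow> nat set set \<times> (nat \<Rightarrow> nat)" where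
  "F2 M k x = (insert {k, M} (fst x), (snd x)(k := 2, M := 1))"

lemma F1_in:
  assumes A: "M \<notin> A'" "\<forall>a\<in>A'. a < M" and x: "(P, c) \<in> avA A'" and col: "col \<in> {1, 2}"
  shows "F1 M ((P, c), col) \<in> avA (insert M A')"
proof -
  note d = avA_memD[OF x]
  have p: "partition_on (insert M A') (insert {M} P)" using part_add[OF d(1), of "{M}"] A(1) by simp
  have e: "c(M := col) \<in> insert M A' \<rightarrow>\<^sub>E {1, 2}" using upd_PiE[OF d(2) col] .
  show ?thesis unfolding F1_def fst_conv snd_conv
  proof (rule avA_memI[OF p e])
    fix B i j assume B: "B \<in> insert {M} P" "i \<in> B" "j \<in> B" "i < j"
    show "(c(M := col)) i = 2 \<and> (c(M := col)) j = 1"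
    proof (cases "B = {M}")
      case True then show ?thesis using B by simp
    next
      case False
      then have "B \<in> P" using B by simp
      then have "B \<subseteq> A'" using part_block[OF d(1)] by blast
      then have "i \<noteq> M" "j \<noteq> M" using B A by auto
      then show ?thesis using d(3)[OF \<open>B \<in> P\<close> B(2-4)] by simp
    qed
  qed
qed

lemma F2_in:
  assumes A: "M \<notin> A'" "\<forall>a\<in>A'. a < M" and k: "k \<in> A'" and x: "(P, c) \<in> avA (A' - {k})"
  shows "F2 M k (P, c) \<in> avA (insert M A')"
proof -
  note d = avA_memD[OF x]
  have kM: "k < M" using A k by blast
  have "{k, M} \<inter> (A' - {k}) = {}" using A(1) by auto
  then have "partition_on ((A' - {k}) \<union> {k, M}) (insert {k, M} P)" using part_add[OF d(1), of "{k, M}"] by blast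
  moreover have "(A' - {k}) \<union> {k, M} = insert M A'" using k by auto
  ultimately have p: "partition_on (insert M A') (insert {k, M} P)" by simp
  have "c(k := 2) \<in> insert k (A' - {k}) \<rightarrow>\<^sub>E {1, 2}" using upd_PiE[OF d(2), of 2 k] by simp
  then have "c(k := 2, M := 1) \<in> insert M (insert k (A' - {k})) \<rightarrow>\<^sub>E {1, 2}" using upd_PiE[of "c(k := 2)" _ _ 1 M] by simp
  moreover have "insert M (insert k (A' - {k})) = insert M A'" using k by auto
  ultimately have e: "c(k := 2, M := 1) \<in> insert M A' \<rightarrow>\<^sub>E {1, 2}" by simp
  show ?thesis unfolding F2_def fst_conv snd_conv
  proof (rule avA_memI[OF p e])
    fix B i j assume B: "B \<in> insert {k, M} P" "i \<in> B" "j \<in> B" "i < j"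
    show "(c(k := 2, M := 1)) i = 2 \<and> (c(k := 2, M := 1)) j = 1"
    proof (cases "B = {k, M}")
      case True
      then have "i = k" "j = M" using B kM by auto
      then show ?thesis using kM by simp
    next
      case False
      then have "B \<in> P" using B by simp
      then have "B \<subseteq> A' - {k}" using part_block[OF d(1)] by blast
      then have "i \<noteq> M" "j \<noteq> M" "i \<noteq> k" "j \<noteq> k" using B A by auto
      then show ?thesis using d(3)[OF \<open>B \<in> P\<close> B(2-4)] by simp
    qed
  qed
qed



lemma part_uniq: "partition_on A P \<Longrightarrow> B1 \<in> P \<Longrightarrow> B2 \<in> P \<Longrightarrow> x \<in> B1 \<Longrightarrow> x \<in> B2 \<Longrightarrow> B1 = B2"
  using partition_onD2 unfolding disjoint_def by blast

lemma avA_rec: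
  assumes fin: "finite A" and ne: "A \<noteq> {}"
  defines "M \<equiv> Max A"
  shows "avA A = F1 M ` (avA (A - {M}) \<times> {1, 2}) \<union> (\<Union>k\<in>A - {M}. F2 M k ` avA (A - {M} - {k}))"
proof -
  have MA: "M \<in> A" unfolding M_def using fin ne by simp
  have Mlt: "\<forall>a\<in>A - {M}. a < M"
  proof
    fix a assume "a \<in> A - {M}"
    then have "a \<le> M" "a \<noteq> M" unfolding M_def using fin by auto
    then show "a < M" by simp
  qed
  have AM: "insert M (A - {M}) = A" using MA by auto
  have nM: "M \<notin> A - {M}" by simp
  show ?thesis
  proof (intro equalityI subsetI)
    fix x assume "x \<in> F1 M ` (avA (A - {M}) \<times> {1, 2}) \<union> (\<Union>k\<in>A - {M}. F2 M k ` avA (A - {M} - {k}))"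
    then consider y col where "x = F1 M (y, col)" "y \<in> avA (A - {M})" "col \<in> {1, 2}"
      | k y where "k \<in> A - {M}" "x = F2 M k y" "y \<in> avA (A - {M} - {k})"
      by blast
    then show "x \<in> avA A"
    proof cases
      case 1
      obtain P c where y: "y = (P, c)" by (cases y)
      show ?thesis using F1_in[OF nM Mlt, of P c col] 1 y AM by simp
    next
      case 2
      obtain P c where y: "y = (P, c)" by (cases y)
      show ?thesis using F2_in[OF nM Mlt 2(1), of P c] 2 y AM by simp
    qed
  next
    fix x assume x: "x \<in> avA A"
    obtain P c where xe: "x = (P, c)" by (cases x)
    note d = avA_memD[OF x[unfolded xe]]
    obtain B where B: "B \<in> P" "M \<in> B" using partition_onD1[OF d(1)] MA by blast
    have BA: "B \<subseteq> A" using part_block[OF d(1) B(1)] .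
    have notin: "M \<notin> B'" if "B' \<in> P" "B' \<noteq> B" for B'
      using part_uniq[OF d(1) that(1) B(1) _ B(2)] that(2) by blast
    show "x \<in> F1 M ` (avA (A - {M}) \<times> {1, 2}) \<union> (\<Union>k\<in>A - {M}. F2 M k ` avA (A - {M} - {k}))"
    proof (cases "B = {M}")
      case True
      define P' where "P' = P - {B}"
      define c' where "c' = c(M := undefined)"
      have p': "partition_on (A - {M}) P'" unfolding P'_def using part_remove[OF d(1) B(1)] True by simp
      have e': "c' \<in> (A - {M}) \<rightarrow>\<^sub>E {1, 2}" unfolding c'_def by (rule upd_PiE_del[OF d(2)])
      have y: "(P', c') \<in> avA (A - {M})"
      proof (rule avA_memI[OF p' e'])
        fix B' i j assume h: "B' \<in> P'" "i \<in> B'" "j \<in> B'" "i < j"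
        then have "B' \<in> P" "B' \<noteq> B" unfolding P'_def by auto
        then have "M \<notin> B'" using notin by blast
        then have "i \<noteq> M" "j \<noteq> M" using h by auto
        then show "c' i = 2 \<and> c' j = 1" unfolding c'_def using d(3)[OF \<open>B' \<in> P\<close> h(2-4)] by simp
      qed
      have col: "c M \<in> {1, 2}" using PiE_mem[OF d(2) MA] .
      have "F1 M ((P', c'), c M) = (P, c)"
        unfolding F1_def P'_def c'_def using True B(1) by auto
      then have "x \<in> F1 M ` (avA (A - {M}) \<times> {1, 2})" using y col xe
        by (metis SigmaI image_eqI)
      then show ?thesis by blast
    next
      case False
      then obtain k where k: "k \<in> B" "k \<noteq> M" using B(2) by blast
      have kA: "k \<in> A - {M}" using k BA by auto
      have kM: "k < M" using Mlt kA by blast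
      have ck: "c k = 2" "c M = 1" using d(3)[OF B(1) k(1) B(2) kM] by auto
      have Beq: "B = {k, M}"
      proof (rule ccontr)
        assume "B \<noteq> {k, M}"
        then obtain j where j: "j \<in> B" "j \<noteq> k" "j \<noteq> M" using k B by blast
        have "j \<in> A - {M}" using j BA by auto
        then have "j < M" using Mlt by blast
        then have cj: "c j = 2" using d(3)[OF B(1) j(1) B(2)] by simp
        consider "j < k" | "k < j" using j(2) by linarith
        then show False
        proof cases
          case 1 then have "c k = 1" using d(3)[OF B(1) j(1) k(1)] by simp
          then show False using ck by simp
        next
          case 2 then have "c j = 1" using d(3)[OF B(1) k(1) j(1)] by simp
          then show False using cj by simp
        qed
      qed
      define P' where "P' = P - {B}"
      define c' where "c' = c(k := undefined, M := undefined)"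
      have "partition_on (A - B) P'" unfolding P'_def using part_remove[OF d(1) B(1)] .
      moreover have "A - B = A - {M} - {k}" using Beq by auto
      ultimately have p': "partition_on (A - {M} - {k}) P'" by simp
      have "c(k := undefined) \<in> (A - {k}) \<rightarrow>\<^sub>E {1, 2}" by (rule upd_PiE_del[OF d(2)])
      then have "c' \<in> (A - {k} - {M}) \<rightarrow>\<^sub>E {1, 2}" unfolding c'_def by (rule upd_PiE_del)
      moreover have "A - {k} - {M} = A - {M} - {k}" by auto
      ultimately have e': "c' \<in> (A - {M} - {k}) \<rightarrow>\<^sub>E {1, 2}" by simp
      have notk: "k \<notin> B'" if "B' \<in> P" "B' \<noteq> B" for B'
        using part_uniq[OF d(1) that(1) B(1) _ k(1)] that(2) by blast
      have y: "(P', c') \<in> avA (A - {M} - {k})"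
      proof (rule avA_memI[OF p' e'])
        fix B' i j assume h: "B' \<in> P'" "i \<in> B'" "j \<in> B'" "i < j"
        then have "B' \<in> P" "B' \<noteq> B" unfolding P'_def by auto
        then have "M \<notin> B'" "k \<notin> B'" using notin notk by blast+
        then have "i \<noteq> M" "j \<noteq> M" "i \<noteq> k" "j \<noteq> k" using h by auto
        then show "c' i = 2 \<and> c' j = 1" unfolding c'_def using d(3)[OF \<open>B' \<in> P\<close> h(2-4)] by simp
      qed
      have "insert {k, M} P' = P" unfolding P'_def using B(1) Beq by auto
      moreover have "c'(k := 2, M := 1) = c" unfolding c'_def using ck by (auto simp: fun_eq_iff)
      ultimately have "F2 M k (P', c') = (P, c)" unfolding F2_def by simp
      then have "x \<in> F2 M k ` avA (A - {M} - {k})" using y xe by (metis image_eqI)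
      then show ?thesis using kA by blast
    qed
  qed
qed



fun fp :: "nat \<Rightarrow> nat" where
  "fp 0 = 1" | "fp (Suc 0) = 2" | "fp (Suc (Suc n)) = 2 * fp (Suc n) + Suc n * fp n"

lemma fp_Suc: "fp (Suc m) = 2 * fp m + m * fp (m - 1)"
  by (cases m) auto

lemma avA_notin: "(P, c) \<in> avA S \<Longrightarrow> M \<notin> S \<Longrightarrow> B \<in> P \<Longrightarrow> M \<notin> B"
  using part_block[OF avA_memD(1)] by blast

lemma avA_ext: "(P, c) \<in> avA S \<Longrightarrow> M \<notin> S \<Longrightarrow> c M = undefined"
  using avA_memD(2) unfolding PiE_def extensional_def by blast

lemma avA_empty: "avA {} = {({}, \<lambda>_. undefined)}"
proof -
  have "x \<in> avA {} \<longleftrightarrow> x = ({}, \<lambda>_. undefined)" for x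
  proof -
    obtain P c where x: "x = (P, c)" by (cases x)
    show ?thesis unfolding x avA_def by (auto simp: partition_on_empty PiE_empty_domain)
  qed
  then show ?thesis by blast
qed

lemma inj_F1:
  assumes "M \<notin> S" shows "inj_on (F1 M) (avA S \<times> {1, 2})"
proof (rule inj_onI)
  fix a b assume a: "a \<in> avA S \<times> {1, 2}" and b: "b \<in> avA S \<times> {1, 2}" and e: "F1 M a = F1 M b"
  obtain P1 c1 v1 where a': "a = ((P1, c1), v1)" by (cases a) auto
  obtain P2 c2 v2 where b': "b = ((P2, c2), v2)" by (cases b) auto
  have m1: "(P1, c1) \<in> avA S" and m2: "(P2, c2) \<in> avA S" using a b a' b' by auto
  have e1: "insert {M} P1 = insert {M} P2" and e2: "c1(M := v1) = c2(M := v2)"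
    using e unfolding a' b' F1_def by auto
  have "{M} \<notin> P1" using avA_notin[OF m1 assms] by blast
  moreover have "{M} \<notin> P2" using avA_notin[OF m2 assms] by blast
  ultimately have "P1 = P2" using e1 by (metis insert_ident)
  moreover have "v1 = v2" using fun_cong[OF e2, of M] by simp
  moreover have "c1 = c2"
  proof
    fix z show "c1 z = c2 z"
    proof (cases "z = M")
      case True then show ?thesis using avA_ext[OF m1 assms] avA_ext[OF m2 assms] by simp
    next
      case False then show ?thesis using fun_cong[OF e2, of z] by simp
    qed
  qed
  ultimately show "a = b" using a' b' by simp
qed

lemma inj_F2:
  assumes "M \<notin> S" "k \<noteq> M" shows "inj_on (F2 M k) (avA (S - {k}))"
proof (rule inj_onI)
  fix a b assume a: "a \<in> avA (S - {k})" and b: "b \<in> avA (S - {k})" and e: "F2 M k a = F2 M k b"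
  obtain P1 c1 where a': "a = (P1, c1)" by (cases a) auto
  obtain P2 c2 where b': "b = (P2, c2)" by (cases b) auto
  have m1: "(P1, c1) \<in> avA (S - {k})" and m2: "(P2, c2) \<in> avA (S - {k})" using a b a' b' by auto
  have nM: "M \<notin> S - {k}" using assms by simp
  have nk: "k \<notin> S - {k}" by simp
  have e1: "insert {k, M} P1 = insert {k, M} P2" and e2: "c1(k := 2, M := 1) = c2(k := 2, M := 1)"
    using e unfolding a' b' F2_def by auto
  have "{k, M} \<notin> P1" using avA_notin[OF m1 nM] by blast
  moreover have "{k, M} \<notin> P2" using avA_notin[OF m2 nM] by blast
  ultimately have "P1 = P2" using e1 by (metis insert_ident)
  moreover have "c1 = c2"
  proof
    fix z show "c1 z = c2 z"
    proof (cases "z = M \<or> z = k")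
      case True then show ?thesis
        using avA_ext[OF m1 nM] avA_ext[OF m2 nM] avA_ext[OF m1 nk] avA_ext[OF m2 nk] by auto
    next
      case False then show ?thesis using fun_cong[OF e2, of z] by simp
    qed
  qed
  ultimately show "a = b" using a' b' by simp
qed

lemma avA_card: "finite A \<Longrightarrow> card (avA A) = fp (card A)"
proof (induction "card A" arbitrary: A rule: less_induct)
  case less
  show ?case
  proof (cases "card A")
    case 0
    then have "A = {}" using less.prems by simp
    then show ?thesis by (simp add: avA_empty)
  next
    case (Suc m)
    have fin: "finite A" by fact
    have ne: "A \<noteq> {}" using Suc by auto
    define M where "M = Max A"
    have MA: "M \<in> A" unfolding M_def using fin ne by simp
    define A' where "A' = A - {M}"
    have nM: "M \<notin> A'" unfolding A'_def by simp
    have cA': "card A' = m" unfolding A'_def using MA fin Suc by simp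
    have finA': "finite A'" unfolding A'_def using fin by simp
    let ?X1 = "F1 M ` (avA A' \<times> {1, 2})"
    let ?X3 = "\<Union>k\<in>A'. F2 M k ` avA (A' - {k})"
    have rec: "avA A = ?X1 \<union> ?X3" unfolding A'_def M_def using avA_rec[OF fin ne] .
    have f1: "finite ?X1" using finA' by (simp add: finite_avA)
    have f3: "finite ?X3" using finA' by (simp add: finite_avA)
    have dis: "?X1 \<inter> ?X3 = {}"
    proof (rule ccontr)
      assume "?X1 \<inter> ?X3 \<noteq> {}"
      then obtain y col k z where y: "y \<in> avA A'" and k: "k \<in> A'" and z: "z \<in> avA (A' - {k})"
        and eq: "F1 M (y, col) = F2 M k z" by blast
      obtain P c where zz: "z = (P, c)" by (cases z)
      obtain P1 c1 where yy: "y = (P1, c1)" by (cases y)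
      have "{M} \<in> fst (F1 M (y, col))" unfolding F1_def by simp
      then have "{M} \<in> insert {k, M} P" using eq zz unfolding F2_def by simp
      moreover have "{M} \<noteq> {k, M}" using k nM by auto
      moreover have "{M} \<notin> P" using avA_notin[OF z[unfolded zz], of M] nM by blast
      ultimately show False by simp
    qed
    have "card (avA A) = card ?X1 + card ?X3" unfolding rec using f1 f3 dis by (simp add: card_Un_disjoint)
    also have "card ?X1 = card (avA A' \<times> ({1, 2}::nat set))" by (rule card_image[OF inj_F1[OF nM]])
    also have "\<dots> = 2 * fp m"
      using less.hyps[of A'] cA' Suc finA' by (simp add: card_cartesian_product)
    also have "card ?X3 = (\<Sum>k\<in>A'. card (F2 M k ` avA (A' - {k})))"
    proof (rule card_UN_disjoint)
      show "finite A'" by fact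
      show "\<forall>k\<in>A'. finite (F2 M k ` avA (A' - {k}))" using finA' by (simp add: finite_avA)
      show "\<forall>i\<in>A'. \<forall>j\<in>A'. i \<noteq> j \<longrightarrow> F2 M i ` avA (A' - {i}) \<inter> F2 M j ` avA (A' - {j}) = {}"
      proof (intro ballI impI)
        fix i j assume i: "i \<in> A'" and j: "j \<in> A'" and ij: "i \<noteq> j"
        show "F2 M i ` avA (A' - {i}) \<inter> F2 M j ` avA (A' - {j}) = {}"
        proof (rule ccontr)
          assume "F2 M i ` avA (A' - {i}) \<inter> F2 M j ` avA (A' - {j}) \<noteq> {}"
          then obtain y z where y: "y \<in> avA (A' - {i})" and z: "z \<in> avA (A' - {j})"
            and eq: "F2 M i y = F2 M j z" by blast
          obtain P c where zz: "z = (P, c)" by (cases z)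
          have "{i, M} \<in> fst (F2 M i y)" unfolding F2_def by simp
          then have "{i, M} \<in> fst (F2 M j z)" by (simp only: eq)
          then have "{i, M} \<in> insert {j, M} P" using zz unfolding F2_def by simp
          moreover have "{i, M} \<noteq> {j, M}" using ij i j nM by (auto simp: doubleton_eq_iff)
          moreover have "{i, M} \<notin> P" using avA_notin[OF z[unfolded zz], of M] nM by blast
          ultimately show False by simp
        qed
      qed
    qed
    also have "\<dots> = (\<Sum>k\<in>A'. fp (m - 1))"
    proof (rule sum.cong)
      fix k assume k: "k \<in> A'"
      have "card (F2 M k ` avA (A' - {k})) = card (avA (A' - {k}))"
        by (rule card_image[OF inj_F2]) (use nM k in auto)
      also have "\<dots> = fp (m - 1)"
        using less.hyps[of "A' - {k}"] k cA' finA' Suc by (simp add: card_Diff_singleton)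
      finally show "card (F2 M k ` avA (A' - {k})) = fp (m - 1)" .
    qed simp
    also have "\<dots> = m * fp (m - 1)" using cA' by simp
    finally show ?thesis using Suc fp_Suc by simp
  qed
qed


lemma fp_fq: "fp n = fq (Suc n)"
  by (induction n rule: fp.induct) simp_all

lemma S_eq: "S_12_3_214_3 m = avq {1..m}"
  unfolding S_12_3_214_3_def perms_of_def avq_def av_def by auto

theorem mainTheorem5:
  fixes n :: nat
  shows "card (avoid_11_12 n) = card (S_12_3_214_3 (n + 1))"
proof -
  have "card (avoid_11_12 n) = fp n" using avA_card[of "{1..n}"] by (simp add: avoid_eq)
  also have "\<dots> = fq (Suc n)" by (rule fp_fq)
  also have "\<dots> = card (S_12_3_214_3 (n + 1))" using avq_card[of "{1..Suc n}"] by (simp add: S_eq)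
  finally show ?thesis .
qed

end
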